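(* Let $\kappa$ be a regular uncountable cardinal with $\kappa^{<\kappa}=\kappa$ and $\gamma^\omega<\kappa$ for all $\gamma<\kappa$, and let $I$ and $I_\alpha$ be as in the context. For every limit ordinal $\delta<\kappa$ and every $\nu\in I$ there is $\beta<\delta$ such that for every $\sigma\in I_\delta$ with $\sigma>\nu$ there is $\sigma'\in I_\beta$ with $\sigma\ge\sigma'\ge\nu$.
   Context: $I^0$: order $\kappa\times\mathbb Q$ lexicographically; $I^0$ is the set of $f:\omega\to\kappa\times\mathbb Q$, $f(n)=(f_1(n),f_2(n))$, with $\{n\mid f_1(n)\ne0\}$ finite, ordered by comparing at the least $n$ where they differ. Construct linear orders $I^0\subseteq I^1\subseteq\dots$ ($i<\kappa$): given $I^i$, for each $\nu\in I^i$ add a new element $\nu^{i+1}$ with $\nu^{i+1}<\nu$ and, for every $\tau\in I^i\setminus\{\nu\}$, $\tau<\nu^{i+1}$ iff $\tau<\nu$ (for distinct $\nu,\mu$, $\nu^{i+1}<\mu^{i+1}$ iff $\nu<\mu$); $I^{i+1}=I^i\cup\{\nu^{i+1}\mid\nu\in I^i\}$; at limits take unions; $I=\bigcup_{i<\kappa}I^i$. Representations: $I^0_\alpha=\{\nu\in I^0\mid\nu_1(n)<\alpha\ \forall n\}$; $I^{i+1}_\alpha=I^i_\alpha\cup\{\nu^{i+1}\mid\nu\in I^i_\alpha\}$; for limit $i$, $I^i_\alpha=\bigcup_{j<i}I^j_\alpha$; finally $I_\alpha=I^\alpha_\alpha$. *)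

theory Defs
  imports Main "HOL.Rat"
begin

text \<open>The cardinal kappa is represented by a wellordered type 'k whose order type is
  the initial ordinal kappa (card_order of its order relation); elements of 'k are
  the ordinals below kappa.\<close>

definition kord :: "('k::wellorder \<times> 'k) set" where
  "kord = {(x, y). x \<le> y}"

definition kzero :: "'k::wellorder" where
  "kzero = (LEAST x. True)"

definition is_limit :: "'k::wellorder \<Rightarrow> bool" where
  "is_limit d \<longleftrightarrow> d \<noteq> kzero \<and> (\<forall>b. b < d \<longrightarrow> (\<exists>c. b < c \<and> c < d))"

definition pair_less :: "'k::wellorder \<times> rat \<Rightarrow> 'k \<times> rat \<Rightarrow> bool" where
  "pair_less x y \<longleftrightarrow> fst x < fst y \<or> (fst x = fst y \<and> snd x < snd y)"

definition I0 :: "(nat \<Rightarrow> 'k::wellorder \<times> rat) set" where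
  "I0 = {f. finite {n. fst (f n) \<noteq> kzero}}"

definition lex0_less :: "(nat \<Rightarrow> 'k::wellorder \<times> rat) \<Rightarrow> (nat \<Rightarrow> 'k \<times> rat) \<Rightarrow> bool" where
  "lex0_less f g \<longleftrightarrow> (\<exists>n. (\<forall>m<n. f m = g m) \<and> pair_less (f n) (g n))"

text \<open>Elements of I: a pair (f, [a1,...,ak]) with f in I^0 and a1 < ... < ak in kappa
  stands for the element f^{a1+1 ... ak+1}, i.e. the new element nu^{ak+1} added at stage
  ak+1 for nu = (f,[a1,...,a(k-1)]) (which lies in I^{ak} since a(k-1) < ak).\<close>
type_synonym 'k elt = "(nat \<Rightarrow> 'k \<times> rat) \<times> 'k list"

definition Iset :: "'k::wellorder elt set" where
  "Iset = {(f, A). f \<in> I0 \<and> sorted_wrt (<) A}"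

text \<open>The order on I, exactly following the construction: nu^{i+1} < nu, for tau in
  I^i - {nu}: tau < nu^{i+1} iff tau < nu, and nu^{i+1} < mu^{i+1} iff nu < mu.\<close>
function Iless :: "'k::wellorder elt \<Rightarrow> 'k elt \<Rightarrow> bool" where
  "Iless (f, A) (g, B) =
    (if A = [] \<and> B = [] then lex0_less f g
     else if B = [] \<or> (A \<noteq> [] \<and> last B < last A)
       then ((f, butlast A) = (g, B) \<or> Iless (f, butlast A) (g, B))
     else if A = [] \<or> last A < last B
       then ((f, A) \<noteq> (g, butlast B) \<and> Iless (f, A) (g, butlast B))
     else Iless (f, butlast A) (g, butlast B))"
  by pat_completeness auto
termination
proof (relation "measure (\<lambda>((f, A), (g, B)). length A + length B)", goal_cases)
  case 1 show ?case by auto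
next
  case (2 f A g B) then show ?case by (cases A) auto
next
  case (3 f A g B) then show ?case by (cases B) auto
next
  case (4 f A g B) then show ?case by (cases A; cases B) auto
qed

text \<open>I^i (i < kappa): elements created at stage at most i.\<close>
definition Istage :: "'k::wellorder \<Rightarrow> 'k elt set" where
  "Istage i = {(f, A) \<in> Iset. \<forall>a \<in> set A. a < i}"

definition Ialpha :: "'k::wellorder \<Rightarrow> 'k elt set" where
  "Ialpha \<alpha> = {(f, A) \<in> Iset. (\<forall>n. fst (f n) < \<alpha>) \<and> (\<forall>a \<in> set A. a < \<alpha>)}"

end

theory Submission imports Defs begin

declare Iless.simps[simp del]

definition sltS :: "'k::wellorder set \<Rightarrow> 'k set \<Rightarrow> bool" where
  "sltS X Y \<longleftrightarrow> (\<exists>d. d \<in> X \<and> d \<notin> Y \<and> (\<forall>x<d. x \<in> X \<longleftrightarrow> x \<in> Y))"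

lemma sltS_ins1:
  assumes "\<forall>x\<in>X \<union> Y. x < a"
  shows "sltS (insert a X) Y \<longleftrightarrow> (X = Y \<or> sltS X Y)"
proof
  assume "sltS (insert a X) Y"
  then obtain d where d: "d \<in> insert a X" "d \<notin> Y" "\<forall>x<d. x \<in> insert a X \<longleftrightarrow> x \<in> Y"
    unfolding sltS_def by blast
  show "X = Y \<or> sltS X Y"
  proof (cases "d = a")
    case True
    then have "X = Y" using d assms by auto
    then show ?thesis by simp
  next
    case False
    then have "d \<in> X" using d by auto
    then have "d < a" using assms by auto
    then have "sltS X Y" unfolding sltS_def using d False
      by (metis insert_iff order_less_irrefl order.strict_trans \<open>d \<in> X\<close>)
    then show ?thesis by simp
  qed
next
  assume "X = Y \<or> sltS X Y"
  then show "sltS (insert a X) Y"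
  proof
    assume "X = Y" then show ?thesis unfolding sltS_def using assms
      by (intro exI[of _ a]) auto
  next
    assume "sltS X Y"
    then obtain d where d: "d \<in> X" "d \<notin> Y" "\<forall>x<d. x \<in> X \<longleftrightarrow> x \<in> Y"
      unfolding sltS_def by blast
    have "d < a" using d assms by auto
    then show ?thesis unfolding sltS_def using d
      by (intro exI[of _ d]) auto
  qed
qed

lemma sltS_ins2:
  assumes "\<forall>x\<in>X \<union> Y. x < a"
  shows "sltS X (insert a Y) \<longleftrightarrow> (X \<noteq> Y \<and> sltS X Y)"
proof
  assume "sltS X (insert a Y)"
  then obtain d where d: "d \<in> X" "d \<notin> insert a Y" "\<forall>x<d. x \<in> X \<longleftrightarrow> x \<in> insert a Y"
    unfolding sltS_def by blast
  have "d < a" using d assms by auto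
  then have "sltS X Y" unfolding sltS_def using d by (intro exI[of _ d]) auto
  moreover have "X \<noteq> Y" using d by auto
  ultimately show "X \<noteq> Y \<and> sltS X Y" by simp
next
  assume h: "X \<noteq> Y \<and> sltS X Y"
  then obtain d where d: "d \<in> X" "d \<notin> Y" "\<forall>x<d. x \<in> X \<longleftrightarrow> x \<in> Y"
    unfolding sltS_def by blast
  have "d < a" using d assms by auto
  then show "sltS X (insert a Y)" unfolding sltS_def using d by (intro exI[of _ d]) auto
qed

lemma sltS_ins3:
  assumes "\<forall>x\<in>X \<union> Y. x < a"
  shows "sltS (insert a X) (insert a Y) \<longleftrightarrow> sltS X Y"
proof
  assume "sltS (insert a X) (insert a Y)"
  then obtain d where d: "d \<in> insert a X" "d \<notin> insert a Y" "\<forall>x<d. x \<in> insert a X \<longleftrightarrow> x \<in> insert a Y"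
    unfolding sltS_def by blast
  have "d < a" using d assms by auto
  then show "sltS X Y" unfolding sltS_def using d by (intro exI[of _ d]) auto
next
  assume "sltS X Y"
  then obtain d where d: "d \<in> X" "d \<notin> Y" "\<forall>x<d. x \<in> X \<longleftrightarrow> x \<in> Y"
    unfolding sltS_def by blast
  have "d < a" using d assms by auto
  then show "sltS (insert a X) (insert a Y)" unfolding sltS_def using d by (intro exI[of _ d]) auto
qed

lemma sorted_last:
  assumes "sorted_wrt (<) A" "A \<noteq> []"
  shows "set A = insert (last A) (set (butlast A))" "\<forall>x\<in>set (butlast A). x < last A"
    "sorted_wrt (<) (butlast A)"
proof -
  have e: "A = butlast A @ [last A]" using assms by simp
  show "set A = insert (last A) (set (butlast A))" by (subst e) auto
  show "\<forall>x\<in>set (butlast A). x < last A" "sorted_wrt (<) (butlast A)"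
    using assms(1) e sorted_wrt_append[of "(<)" "butlast A" "[last A]"] by auto
qed

lemma lex0_irrefl: "\<not> lex0_less f f"
  unfolding lex0_less_def pair_less_def by auto

lemma Iless_char:
  "sorted_wrt (<) A \<Longrightarrow> sorted_wrt (<) (B::'k::wellorder list) \<Longrightarrow>
   Iless (f,A) (g,B) \<longleftrightarrow> (lex0_less f g \<or> (f = g \<and> sltS (set A) (set B)))"
proof (induction "length A + length B" arbitrary: A B rule: less_induct)
  case less
  show ?case
  proof (cases "A = [] \<and> B = []")
    case True
    then show ?thesis by (auto simp: sltS_def Iless.simps)
  next
    case nAB: False
    show ?thesis
    proof (cases "B = [] \<or> (A \<noteq> [] \<and> last B < last A)")
      case c2: True
      then have An: "A \<noteq> []" using nAB by auto
      note LA = sorted_last[OF less.prems(1) An]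
      have lt: "\<forall>x\<in>set (butlast A) \<union> set B. x < last A"
      proof
        fix x assume "x \<in> set (butlast A) \<union> set B"
        then show "x < last A"
        proof
          assume "x \<in> set B"
          then have "B \<noteq> []" by auto
          then show ?thesis using c2 sorted_last[OF less.prems(2)] \<open>x \<in> set B\<close>
            by (metis insert_iff order.strict_trans)
        qed (use LA in auto)
      qed
      have IH: "Iless (f, butlast A) (g, B) \<longleftrightarrow> (lex0_less f g \<or> (f = g \<and> sltS (set (butlast A)) (set B)))"
        using less.hyps[of "butlast A" B] An LA(3) less.prems(2) by simp
      have eq: "butlast A = B \<longleftrightarrow> set (butlast A) = set B"
        using strict_sorted_equal[OF LA(3) less.prems(2)] by metis
      have "Iless (f,A) (g,B) = ((f, butlast A) = (g, B) \<or> Iless (f, butlast A) (g, B))"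
        using c2 nAB An by (subst Iless.simps) simp
      also have "\<dots> \<longleftrightarrow> (lex0_less f g \<or> (f = g \<and> sltS (set A) (set B)))"
        using IH eq sltS_ins1[OF lt] LA(1) lex0_irrefl by auto
      finally show ?thesis .
    next
      case nc2: False
      show ?thesis
      proof (cases "A = [] \<or> last A < last B")
        case c3: True
        then have Bn: "B \<noteq> []" using nAB nc2 by auto
        note LB = sorted_last[OF less.prems(2) Bn]
        have lt: "\<forall>x\<in>set A \<union> set (butlast B). x < last B"
        proof
          fix x assume "x \<in> set A \<union> set (butlast B)"
          then show "x < last B"
          proof
            assume "x \<in> set A"
            then have "A \<noteq> []" by auto
            then show ?thesis using c3 sorted_last[OF less.prems(1)] \<open>x \<in> set A\<close>
              by (metis insert_iff order.strict_trans)
          qed (use LB in auto)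
        qed
        have IH: "Iless (f, A) (g, butlast B) \<longleftrightarrow> (lex0_less f g \<or> (f = g \<and> sltS (set A) (set (butlast B))))"
          using less.hyps[of A "butlast B"] Bn LB(3) less.prems(1) by simp
        have eq: "A = butlast B \<longleftrightarrow> set A = set (butlast B)"
          using strict_sorted_equal[OF less.prems(1) LB(3)] by metis
        have "Iless (f,A) (g,B) = ((f, A) \<noteq> (g, butlast B) \<and> Iless (f, A) (g, butlast B))"
          using c3 nc2 nAB by (subst Iless.simps) auto
        also have "\<dots> \<longleftrightarrow> (lex0_less f g \<or> (f = g \<and> sltS (set A) (set B)))"
          using IH eq sltS_ins2[OF lt] LB(1) lex0_irrefl by auto
        finally show ?thesis .
      next
        case nc3: False
        then have An: "A \<noteq> []" and Bn: "B \<noteq> []" and ab: "last A = last B"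
          using nc2 nAB by auto
        note LA = sorted_last[OF less.prems(1) An]
        note LB = sorted_last[OF less.prems(2) Bn]
        have lt: "\<forall>x\<in>set (butlast A) \<union> set (butlast B). x < last A"
          using LA LB ab by auto
        have IH: "Iless (f, butlast A) (g, butlast B) \<longleftrightarrow> (lex0_less f g \<or> (f = g \<and> sltS (set (butlast A)) (set (butlast B))))"
          using less.hyps[of "butlast A" "butlast B"] An Bn LA(3) LB(3)
          by (metis add_less_le_mono diff_less length_butlast length_greater_0_conv less_one order_le_less)
        have "Iless (f,A) (g,B) = Iless (f, butlast A) (g, butlast B)"
          using nc3 nc2 nAB by (subst Iless.simps) auto
        also have "\<dots> \<longleftrightarrow> (lex0_less f g \<or> (f = g \<and> sltS (set A) (set B)))"
          using IH sltS_ins3[OF lt] LA(1) LB(1) ab by auto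
        finally show ?thesis .
      qed
    qed
  qed
qed

lemma kzero_le: "kzero \<le> (x::'k::wellorder)"
  unfolding kzero_def by (rule Least_le) simp

theorem mainTheorem12:
  fixes \<delta> :: "'k::wellorder" and \<nu> :: "'k elt"
  assumes "card_order (kord :: ('k \<times> 'k) set)"
    and "regularCard (kord :: ('k \<times> 'k) set)"
    and "(card_of (UNIV :: nat set), card_of (UNIV :: 'k set)) \<in> ordLess"
    and "\<forall>g::'k. (card_of (Func {x. x < g} (UNIV :: 'k set)), card_of (UNIV :: 'k set)) \<in> ordLeq"
    and "\<forall>g::'k. (card_of (Func (UNIV :: nat set) {x. x < g}), card_of (UNIV :: 'k set)) \<in> ordLess"
    and "is_limit \<delta>"
    and "\<nu> \<in> Iset"
  shows "\<exists>\<beta><\<delta>. \<forall>\<sigma>\<in>Ialpha \<delta>. Iless \<nu> \<sigma> \<longrightarrow>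
           (\<exists>\<sigma>'\<in>Ialpha \<beta>. (\<sigma>' = \<sigma> \<or> Iless \<sigma>' \<sigma>) \<and> (\<nu> = \<sigma>' \<or> Iless \<nu> \<sigma>'))"
proof -
  obtain f A where nu: "\<nu> = (f, A)" by (cases \<nu>)
  have fI: "f \<in> I0" and sA: "sorted_wrt (<) A" using assms(7) nu unfolding Iset_def by auto
  have lim: "\<delta> \<noteq> kzero" "\<forall>b. b < \<delta> \<longrightarrow> (\<exists>c. b < c \<and> c < \<delta>)"
    using assms(6) unfolding is_limit_def by auto
  have kz: "kzero < \<delta>" using lim(1) kzero_le[of \<delta>] by auto
  define S where "S = insert kzero {x. x < \<delta> \<and> ((\<exists>m. x = fst (f m)) \<or> x \<in> set A)}"
  have finsupp: "finite {n. fst (f n) \<noteq> kzero}" using fI unfolding I0_def by simp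
  have "S \<subseteq> insert kzero ((\<lambda>m. fst (f m)) ` {n. fst (f n) \<noteq> kzero} \<union> set A)"
    unfolding S_def by auto
  then have finS: "finite S" using finsupp by (meson finite_Un finite_imageI finite_insert finite_set finite_subset)
  have Sd: "\<forall>x\<in>S. x < \<delta>" unfolding S_def using kz by auto
  have "S \<noteq> {}" unfolding S_def by auto
  then have "Max S < \<delta>" using Sd finS Max_in by blast
  then obtain \<beta> where b1: "Max S < \<beta>" and b2: "\<beta> < \<delta>" using lim(2) by blast
  have Sb: "\<And>x. x \<in> S \<Longrightarrow> x < \<beta>" using b1 finS by (meson Max_ge order_le_less_trans)
  have inS: "\<And>x. x < \<delta> \<Longrightarrow> (\<exists>m. x = fst (f m)) \<or> x \<in> set A \<Longrightarrow> x \<in> S"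
    unfolding S_def by auto
  have "\<forall>\<sigma>\<in>Ialpha \<delta>. Iless \<nu> \<sigma> \<longrightarrow>
           (\<exists>\<sigma>'\<in>Ialpha \<beta>. (\<sigma>' = \<sigma> \<or> Iless \<sigma>' \<sigma>) \<and> (\<nu> = \<sigma>' \<or> Iless \<nu> \<sigma>'))"
  proof (intro ballI impI)
    fix \<sigma> assume sig: "\<sigma> \<in> Ialpha \<delta>" and less: "Iless \<nu> \<sigma>"
    obtain g B where sg: "\<sigma> = (g, B)" by (cases \<sigma>)
    have gI: "g \<in> I0" and sB: "sorted_wrt (<) B" and gd: "\<forall>n. fst (g n) < \<delta>"
      and Bd: "\<forall>a\<in>set B. a < \<delta>"
      using sig sg unfolding Ialpha_def Iset_def by auto
    have cases: "lex0_less f g \<or> (f = g \<and> sltS (set A) (set B))"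
      using less Iless_char[OF sA sB] nu sg by simp
    then show "\<exists>\<sigma>'\<in>Ialpha \<beta>. (\<sigma>' = \<sigma> \<or> Iless \<sigma>' \<sigma>) \<and> (\<nu> = \<sigma>' \<or> Iless \<nu> \<sigma>')"
    proof
      assume "lex0_less f g"
      then obtain n where n1: "\<forall>m<n. f m = g m" and n2: "pair_less (f n) (g n)"
        unfolding lex0_less_def by blast
      define h where "h = (\<lambda>m. if m < n then g m else if m = n then
          (fst (f n), if fst (f n) < fst (g n) then snd (f n) + 1 else (snd (f n) + snd (g n)) / 2)
          else (kzero, 0))"
      have hn: "pair_less (f n) (h n)" "pair_less (h n) (g n)"
        using n2 unfolding h_def pair_less_def by (auto simp: field_simps)
      have fh: "lex0_less f h" unfolding lex0_less_def
        using n1 hn by (intro exI[of _ n]) (auto simp: h_def)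
      have hg: "lex0_less h g" unfolding lex0_less_def
        using n1 hn by (intro exI[of _ n]) (auto simp: h_def)
      have "{m. fst (h m) \<noteq> kzero} \<subseteq> {..n}" unfolding h_def by auto
      then have hI: "h \<in> I0" unfolding I0_def using finite_subset by blast
      have "fst (h m) < \<beta>" for m
      proof -
        consider "m < n" | "m = n" | "m > n" by linarith
        then show ?thesis
        proof cases
          case 1
          then have "fst (h m) = fst (f m)" "fst (f m) < \<delta>" using n1 gd unfolding h_def by auto
          then show ?thesis using Sb inS by metis
        next
          case 2
          have "fst (f n) \<le> fst (g n)" using n2 unfolding pair_less_def by auto
          then have "fst (h m) = fst (f n)" "fst (f n) < \<delta>" using 2 gd unfolding h_def
            by (auto intro: order_le_less_trans)
          then show ?thesis using Sb inS by metis
        next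
          case 3
          then have "fst (h m) = kzero" unfolding h_def by auto
          then show ?thesis using Sb unfolding S_def by auto
        qed
      qed
      then have hb: "(h, []) \<in> Ialpha \<beta>" using hI unfolding Ialpha_def Iset_def by auto
      have "Iless (h, []) (g, B)" using Iless_char[of "[]" B h g] sB hg by simp
      moreover have "Iless (f, A) (h, [])" using Iless_char[of A "[]" f h] sA fh by simp
      ultimately show ?thesis using hb nu sg by blast
    next
      assume fg: "f = g \<and> sltS (set A) (set B)"
      then obtain d where d: "d \<in> set A" "d \<notin> set B" "\<forall>x<d. x \<in> set A \<longleftrightarrow> x \<in> set B"
        unfolding sltS_def by blast
      have fb: "\<forall>m. fst (f m) < \<beta>" using fg gd Sb inS by metis
      show ?thesis
      proof (cases "d < \<delta>")
        case True
        define C where "C = filter (\<lambda>x. x \<le> d) A"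
        have sC: "sorted_wrt (<) C" unfolding C_def using sA by (rule sorted_wrt_filter)
        have setC: "set C = {x \<in> set A. x \<le> d}" unfolding C_def by auto
        have "\<forall>a\<in>set C. a < \<beta>"
        proof
          fix a assume "a \<in> set C"
          then have "a \<in> set A" "a < \<delta>" using setC True by auto
          then show "a < \<beta>" using Sb inS by metis
        qed
        then have Cb: "(f, C) \<in> Ialpha \<beta>" using fI sC fb unfolding Ialpha_def Iset_def by auto
        have "sltS (set C) (set B)" unfolding sltS_def
          using d setC by (intro exI[of _ d]) auto
        then have CB: "Iless (f, C) (g, B)" using Iless_char[OF sC sB] fg by simp
        have "A = C \<or> sltS (set A) (set C)"
        proof (cases "set A - set C = {}")
          case True
          then have "\<forall>x\<in>set A. x \<le> d" using setC by auto
          then have "C = A" unfolding C_def by (simp add: filter_id_conv)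
          then show ?thesis by simp
        next
          case False
          define e where "e = Min (set A - set C)"
          have e1: "e \<in> set A - set C" unfolding e_def using False Min_in by blast
          have e2: "\<And>x. x \<in> set A - set C \<Longrightarrow> e \<le> x" unfolding e_def by simp
          have "sltS (set A) (set C)" unfolding sltS_def
          proof (intro exI[of _ e] conjI allI impI)
            fix x assume "x < e"
            then show "x \<in> set A \<longleftrightarrow> x \<in> set C" using e2 setC by force
          qed (use e1 in auto)
          then show ?thesis by simp
        qed
        then have "\<nu> = (f, C) \<or> Iless \<nu> (f, C)" using Iless_char[OF sA sC] nu by auto
        then show ?thesis using Cb CB sg by blast
      next
        case False
        have "\<forall>a\<in>set B. a < \<beta>"
        proof
          fix a assume "a \<in> set B"
          then have "a < \<delta>" using Bd by auto
          moreover then have "a < d" using False by (meson not_less order_less_le_trans)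
          ultimately have "a \<in> set A" "a < \<delta>" using d(3) \<open>a \<in> set B\<close> by auto
          then show "a < \<beta>" using Sb inS by metis
        qed
        then have "\<sigma> \<in> Ialpha \<beta>" using sg gI sB fb fg unfolding Ialpha_def Iset_def by auto
        then show ?thesis using less by blast
      qed
    qed
  qed
  then show ?thesis using b2 by blast
qed

end
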